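(* Let $d\ge1$, $\boldsymbol k\in\mathbb Z^d$, $x>0$, $\boldsymbol y\in\mathbb R_+^d$, $\phi\in\mathbb R$. Then $$J_{\boldsymbol k}(\boldsymbol y;2\pi x,\phi)=\frac1{2\pi}\sum_{m\in\mathbb Z}e^{im\phi}j_{(0,m)}(xy_1\cdots y_d)\prod_{l=1}^dj_{(0,k_l+m)}(xy_l^{-1}),$$ the series being absolutely convergent.
   Context: $j_{(0,m)}(x)=2\pi i^mJ_m(4\pi x)$ with $J_m$ the classical $J$-Bessel function. $\Theta_{\boldsymbol k}(\boldsymbol\theta,\boldsymbol y;x,\phi)=2xy_1\cdots y_d\cos(\sum_{l=1}^d\theta_l+\phi)+\sum_{l=1}^d(k_l\theta_l+2xy_l^{-1}\cos\theta_l)$ and $J_{\boldsymbol k}(\boldsymbol y;x,\phi)=\int_{[0,2\pi]^d}e^{i\Theta_{\boldsymbol k}(\boldsymbol\theta,\boldsymbol y;x,\phi)}d\boldsymbol\theta$. *)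

theory Defs
  imports "HOL-Analysis.Analysis"
begin

definition besselJ_nat :: "nat \<Rightarrow> real \<Rightarrow> real" where
  "besselJ_nat n z = (\<Sum>k. (-1)^k / (fact k * fact (k + n)) * (z / 2) ^ (2 * k + n))"

definition besselJ :: "int \<Rightarrow> real \<Rightarrow> real" where
  "besselJ m z = (if m \<ge> 0 then besselJ_nat (nat m) z
                  else (-1) ^ nat (- m) * besselJ_nat (nat (- m)) z)"

definition jfun0 :: "int \<Rightarrow> real \<Rightarrow> complex" where
  "jfun0 m x = 2 * complex_of_real pi * (\<i> powi m) * complex_of_real (besselJ m (4 * pi * x))"

definition Theta :: "('n::finite \<Rightarrow> int) \<Rightarrow> real^'n \<Rightarrow> ('n \<Rightarrow> real) \<Rightarrow> real \<Rightarrow> real \<Rightarrow> real" where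
  "Theta k \<theta> y x \<phi> =
     2 * x * (\<Prod>l\<in>UNIV. y l) * cos ((\<Sum>l\<in>UNIV. \<theta> $ l) + \<phi>)
     + (\<Sum>l\<in>UNIV. of_int (k l) * \<theta> $ l + 2 * x / y l * cos (\<theta> $ l))"

definition Jk :: "('n::finite \<Rightarrow> int) \<Rightarrow> ('n \<Rightarrow> real) \<Rightarrow> real \<Rightarrow> real \<Rightarrow> complex" where
  "Jk k y x \<phi> = integral (cbox (0::real^'n) (\<chi> l. 2 * pi))
                   (\<lambda>\<theta>. exp (\<i> * complex_of_real (Theta k \<theta> y x \<phi>)))"

end

theory Submission
  imports Defs
begin

lemma lborel_prod_Basis:
  fixes f :: "'a::euclidean_space \<Rightarrow> real \<Rightarrow> complex"
  assumes int: "\<And>b. b\<in>Basis \<Longrightarrow> integrable lborel (f b)"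
  shows "integrable lborel (\<lambda>x. \<Prod>b\<in>Basis. f b (x \<bullet> b)) \<and>
         (LINT x|lborel. (\<Prod>b\<in>Basis. f b (x \<bullet> b))) = (\<Prod>b\<in>Basis. LINT t|lborel. f b t)"
proof -
  interpret P: product_sigma_finite "\<lambda>_::'a. lborel::real measure"
    by (simp add: product_sigma_finite_def lborel.sigma_finite_measure_axioms)
  define T where "T = (\<lambda>g::'a\<Rightarrow>real. \<Sum>b\<in>Basis. g b *\<^sub>R b)"
  have TM: "T \<in> measurable (\<Pi>\<^sub>M b\<in>Basis. lborel) borel"
    unfolding T_def by measurable
  have D: "(lborel::'a measure) = distr (\<Pi>\<^sub>M b\<in>Basis. lborel) borel T"
    unfolding T_def by (rule lborel_eq)
  have fm: "\<And>b. b\<in>Basis \<Longrightarrow> f b \<in> borel_measurable borel"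
    using int by (simp add: borel_measurable_integrable)
  have Fm: "(\<lambda>x. \<Prod>b\<in>Basis. f b (x \<bullet> b)) \<in> borel_measurable borel"
  proof (intro borel_measurable_prod)
    fix b :: 'a assume "b\<in>Basis"
    then show "(\<lambda>x. f b (x \<bullet> b)) \<in> borel_measurable borel"
      using fm by (intro measurable_compose[where f="\<lambda>x. x\<bullet>b" and g="f b"]) auto
  qed
  have Tb: "\<And>g b. b \<in> Basis \<Longrightarrow> T g \<bullet> b = g b"
    unfolding T_def by (simp add: inner_sum_left inner_Basis if_distrib sum.delta cong: if_cong)
  have eq: "\<And>g. g \<in> space (\<Pi>\<^sub>M b\<in>Basis. lborel) \<Longrightarrow> (\<Prod>b\<in>Basis. f b (T g \<bullet> b)) = (\<Prod>b\<in>Basis. f b (g b))"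
    using Tb by (intro prod.cong) auto
  have i1: "integrable (\<Pi>\<^sub>M b\<in>Basis. lborel) (\<lambda>g. \<Prod>b\<in>Basis. f b (g b))"
    using int by (intro P.product_integrable_prod) auto
  have "integrable lborel (\<lambda>x. \<Prod>b\<in>Basis. f b (x \<bullet> b))
      = integrable (\<Pi>\<^sub>M b\<in>Basis. lborel) (\<lambda>g. \<Prod>b\<in>Basis. f b (T g \<bullet> b))"
    by (subst D) (rule integrable_distr_eq[OF TM Fm])
  also have "\<dots>" using i1 by (subst Bochner_Integration.integrable_cong[OF refl eq]) auto
  finally have A: "integrable lborel (\<lambda>x. \<Prod>b\<in>Basis. f b (x \<bullet> b))" .
  have "(LINT x|lborel. (\<Prod>b\<in>Basis. f b (x \<bullet> b)))
      = (LINT g|(\<Pi>\<^sub>M b\<in>Basis. lborel). (\<Prod>b\<in>Basis. f b (T g \<bullet> b)))"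
    by (subst D) (rule integral_distr[OF TM Fm])
  also have "\<dots> = (LINT g|(\<Pi>\<^sub>M b\<in>Basis. lborel). (\<Prod>b\<in>Basis. f b (g b)))"
    using eq by (intro Bochner_Integration.integral_cong) auto
  also have "\<dots> = (\<Prod>b\<in>Basis. LINT t|lborel. f b t)"
    using int by (intro P.product_integral_prod) auto
  finally show ?thesis using A by simp
qed

lemma integral_cbox_prod_cart:
  fixes g :: "'n::finite \<Rightarrow> real \<Rightarrow> complex" and c :: real
  assumes c: "c \<ge> 0" and cont: "\<And>l. continuous_on {0..c} (g l)"
  shows "integral (cbox (0::real^'n) (\<chi> l. c)) (\<lambda>\<theta>. \<Prod>l\<in>UNIV. g l (\<theta>$l))
         = (\<Prod>l\<in>UNIV. integral {0..c} (g l))"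
proof -
  define h where "h l t = indicator {0..c} t *\<^sub>R g l t" for l t
  have hi: "integrable lborel (h l)" for l
    unfolding h_def by (rule borel_integrable_compact) (auto intro: cont)
  have h1: "integral {0..c} (g l) = (LINT t|lborel. h l t)" for l
  proof -
    have "(h l has_integral (LINT t|lborel. h l t)) UNIV"
      by (rule has_integral_integral_lborel[OF hi])
    moreover have "h l = (\<lambda>t. if t \<in> {0..c} then g l t else 0)"
      by (auto simp: h_def fun_eq_iff indicator_def)
    ultimately have "(g l has_integral (LINT t|lborel. h l t)) {0..c}"
      using has_integral_restrict_UNIV by metis
    then show ?thesis by (rule integral_unique)
  qed
  define ix where "ix b = (SOME l. b = axis l (1::real))" for b :: "real^'n"
  have B: "(Basis :: (real^'n) set) = range (\<lambda>l. axis l 1)"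
    by (auto simp: Basis_vec_def)
  have inj: "inj (\<lambda>l::'n. axis l (1::real))"
    by (auto simp: inj_def axis_eq_axis)
  have ixa: "ix (axis l 1) = l" for l
    unfolding ix_def using inj by (auto simp: inj_def axis_eq_axis)
  define f where "f b = h (ix b)" for b
  have P: "(\<Prod>b\<in>Basis. f b (x \<bullet> b)) = (\<Prod>l\<in>UNIV. h l (x$l))" for x :: "real^'n"
    unfolding B by (subst prod.reindex[OF inj]) (simp add: f_def ixa inner_axis)
  have H: "(\<Prod>l\<in>UNIV. h l (x$l)) = (if x \<in> cbox 0 (\<chi> l. c) then (\<Prod>l\<in>UNIV. g l (x$l)) else 0)" for x :: "real^'n"
  proof (cases "x \<in> cbox 0 (\<chi> l. c)")
    case True
    then have "\<And>l. x$l \<in> {0..c}" by (simp add: mem_box_cart)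
    then have "\<And>l. h l (x$l) = g l (x$l)" by (simp add: h_def)
    then show ?thesis using True by simp
  next
    case False
    then obtain l where "x$l \<notin> {0..c}" by (auto simp: mem_box_cart)
    then have "h l (x$l) = 0" by (simp add: h_def)
    then have "(\<Prod>l\<in>UNIV. h l (x$l)) = 0" by (intro prod_zero) auto
    then show ?thesis using False by simp
  qed
  have L: "integrable lborel (\<lambda>x::real^'n. \<Prod>b\<in>Basis. f b (x \<bullet> b)) \<and>
         (LINT x|lborel. (\<Prod>b\<in>Basis. f b (x \<bullet> b))) = (\<Prod>b\<in>Basis. LINT t|lborel. f b t)"
    by (rule lborel_prod_Basis) (simp add: f_def hi)
  have V: "(\<Prod>b\<in>Basis. LINT t|lborel. f b t) = (\<Prod>l\<in>UNIV. LINT t|lborel. h l t)"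
    unfolding B by (subst prod.reindex[OF inj]) (simp add: f_def ixa)
  have F: "(\<lambda>x::real^'n. \<Prod>b\<in>Basis. f b (x \<bullet> b)) = (\<lambda>x. if x \<in> cbox 0 (\<chi> l. c) then (\<Prod>l\<in>UNIV. g l (x$l)) else 0)"
    by (rule ext) (simp only: P H)
  have "((\<lambda>x::real^'n. \<Prod>b\<in>Basis. f b (x \<bullet> b)) has_integral (\<Prod>b\<in>Basis. LINT t|lborel. f b t)) UNIV"
    using has_integral_integral_lborel[OF conjunct1[OF L]] L by simp
  then have "((\<lambda>x::real^'n. if x \<in> cbox 0 (\<chi> l. c) then (\<Prod>l\<in>UNIV. g l (x$l)) else 0)
       has_integral (\<Prod>l\<in>UNIV. LINT t|lborel. h l t)) UNIV"
    by (simp only: F V)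
  then have "((\<lambda>x::real^'n. \<Prod>l\<in>UNIV. g l (x$l)) has_integral (\<Prod>l\<in>UNIV. LINT t|lborel. h l t)) (cbox 0 (\<chi> l. c))"
    by (simp only: has_integral_restrict_UNIV)
  then show ?thesis using h1 by (simp only: integral_unique)
qed
lemma has_sum_integral_cbox:
  fixes f :: "int \<Rightarrow> 'a::euclidean_space \<Rightarrow> complex" and B :: "int \<Rightarrow> real"
  assumes Bs: "B summable_on UNIV"
    and bnd: "\<And>n x. x \<in> cbox a b \<Longrightarrow> norm (f n x) \<le> B n"
    and cont: "\<And>n. continuous_on (cbox a b) (f n)"
    and hs: "\<And>x. x \<in> cbox a b \<Longrightarrow> ((\<lambda>n. f n x) has_sum g x) UNIV"
  shows "((\<lambda>n. integral (cbox a b) (f n)) has_sum integral (cbox a b) g) UNIV"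
proof -
  define Fl where "Fl = finite_subsets_at_top (UNIV::int set)"
  define SB where "SB = infsum B UNIV"
  have SBh: "(B has_sum SB) UNIV" using Bs unfolding SB_def by (rule has_sum_infsum)
  have ul: "uniform_limit (cbox a b) (\<lambda>X x. \<Sum>n\<in>X. f n x) g Fl"
  proof (rule uniform_limitI)
    fix e :: real assume e: "e > 0"
    have "((\<lambda>X. \<Sum>n\<in>X. B n) \<longlongrightarrow> SB) Fl" using SBh unfolding has_sum_def Fl_def .
    then have ev: "\<forall>\<^sub>F X in Fl. dist (\<Sum>n\<in>X. B n) SB < e" using e by (rule tendstoD)
    have fin: "\<forall>\<^sub>F X in Fl. finite X" unfolding Fl_def by (rule eventually_finite_subsets_at_top_weakI) auto
    show "\<forall>\<^sub>F X in Fl. \<forall>x\<in>cbox a b. dist (\<Sum>n\<in>X. f n x) (g x) < e"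
      using ev fin
    proof eventually_elim
      case (elim X)
      show ?case
      proof
        fix x assume x: "x \<in> cbox a b"
        have h1: "((\<lambda>n. f n x) has_sum (g x - (\<Sum>n\<in>X. f n x))) (UNIV - X)"
          by (rule has_sum_Diff[OF hs[OF x] has_sum_finite[OF elim(2)]]) auto
        have h2: "(B has_sum (SB - (\<Sum>n\<in>X. B n))) (UNIV - X)"
          by (rule has_sum_Diff[OF SBh has_sum_finite[OF elim(2)]]) auto
        have "norm (g x - (\<Sum>n\<in>X. f n x)) \<le> SB - (\<Sum>n\<in>X. B n)"
          by (rule norm_infsum_le[OF h1 h2]) (use bnd x in auto)
        also have "\<dots> < e" using elim(1) by (simp add: dist_real_def)
        finally show "dist (\<Sum>n\<in>X. f n x) (g x) < e" by (simp add: dist_norm norm_minus_commute)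
      qed
    qed
  qed
  have nb: "Fl \<noteq> bot" unfolding Fl_def by simp
  obtain I J where I: "\<And>X. ((\<lambda>x. \<Sum>n\<in>X. f n x) has_integral I X) (cbox a b)"
     and J: "(g has_integral J) (cbox a b)" and IJ: "(I \<longlongrightarrow> J) Fl"
    using uniform_limit_integral_cbox[OF ul _ nb] cont by (metis continuous_on_sum)
  have fi: "\<And>n. (f n has_integral integral (cbox a b) (f n)) (cbox a b)"
    using cont by (blast intro: integrable_continuous has_integral_integral)
  have "I X = (\<Sum>n\<in>X. integral (cbox a b) (f n))" if "finite X" for X
  proof -
    have "((\<lambda>x. \<Sum>n\<in>X. f n x) has_integral (\<Sum>n\<in>X. integral (cbox a b) (f n))) (cbox a b)"
      using that fi by (intro has_integral_sum) auto
    then show ?thesis using I[of X] by (rule has_integral_unique[symmetric])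
  qed
  then have "\<forall>\<^sub>F X in Fl. I X = (\<Sum>n\<in>X. integral (cbox a b) (f n))"
    unfolding Fl_def by (intro eventually_finite_subsets_at_top_weakI) auto
  then have "((\<lambda>X. \<Sum>n\<in>X. integral (cbox a b) (f n)) \<longlongrightarrow> J) Fl"
    using IJ tendsto_cong by metis
  then show ?thesis using J unfolding has_sum_def Fl_def by (simp add: integral_unique)
qed
lemma bessel_term_norm: "norm ((-1)^k / (fact k * fact (k + n)) * (z / 2) ^ (2 * k + n) :: real)
        = \<bar>z/2\<bar>^(2*k+n) / (fact k * fact (k+n))"
proof -
  have a: "norm ((-1)^k :: real) = 1" by (simp add: norm_power)
  have b: "norm (fact k * fact (k + n) :: real) = fact k * fact (k+n)" by (simp only: real_norm_def abs_mult) simp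
  show ?thesis by (simp add: abs_mult power_abs)
qed

lemma bessel_term_norm_summable:
  "summable (\<lambda>k. norm ((-1)^k / (fact k * fact (k + n)) * (z / 2) ^ (2 * k + n) :: real))"
proof -
  have S: "summable (\<lambda>k. \<bar>z/2\<bar>^n * (inverse (fact k) * (\<bar>z/2\<bar>^2)^k))"
    by (intro summable_mult summable_exp)
  have bnd: "norm ((-1)^k / (fact k * fact (k + n)) * (z / 2) ^ (2 * k + n) :: real)
       \<le> \<bar>z/2\<bar>^n * (inverse (fact k) * (\<bar>z/2\<bar>^2)^k)" for k
  proof -
  have f1: "(1::real) \<le> fact (k + n)" by simp
  have e1: "\<bar>z/2\<bar>^(2*k+n) = \<bar>z/2\<bar>^n * (\<bar>z/2\<bar>^2)^k"
    by (simp only: power_add power_mult mult.commute) (simp only: power_mult[symmetric] mult.commute)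
  have "norm ((-1)^k / (fact k * fact (k + n)) * (z / 2) ^ (2 * k + n) :: real)
        = \<bar>z/2\<bar>^(2*k+n) / (fact k * fact (k+n))"
    by (rule bessel_term_norm)
  also have "\<dots> = \<bar>z/2\<bar>^n * (\<bar>z/2\<bar>^2)^k / (fact k * fact (k+n))"
    by (simp only: e1)
  also have "\<dots> \<le> \<bar>z/2\<bar>^n * (\<bar>z/2\<bar>^2)^k / (fact k * 1)"
  proof (rule divide_left_mono)
    show "fact k * 1 \<le> fact k * (fact (k+n)::real)" by (rule mult_left_mono[OF f1]) simp
  qed simp_all
  also have "\<dots> = \<bar>z/2\<bar>^n * (inverse (fact k) * (\<bar>z/2\<bar>^2)^k)"
    by (simp only: mult_1_right mult_1_left divide_inverse mult.assoc mult.left_commute mult.commute)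
  finally show ?thesis .
  qed
  show ?thesis by (rule summable_comparison_test'[OF S]) (simp only: real_norm_def abs_abs bnd[unfolded real_norm_def])
qed

lemma bessel_sums:
  "(\<lambda>k. (-1)^k / (fact k * fact (k + n)) * (z / 2) ^ (2 * k + n) :: real) sums besselJ_nat n z"
  unfolding besselJ_nat_def
  by (rule summable_sums[OF summable_norm_cancel[OF bessel_term_norm_summable]])

lemma exp_has_sum: "((\<lambda>n. x^n /\<^sub>R fact n) has_sum exp x) (UNIV::nat set)"
  for x :: complex
proof (rule norm_summable_imp_has_sum[OF _ exp_converges])
  show "summable (\<lambda>n. norm (x^n /\<^sub>R fact n))"
    using summable_exp_generic[of "norm x"] by (simp add: norm_power)
qed

lemma exp_abs_summable: "(\<lambda>n. norm (x^n /\<^sub>R fact n)) summable_on (UNIV::nat set)"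
  for x :: complex
proof -
  have "summable (\<lambda>n. norm (x^n /\<^sub>R fact n))"
    using summable_exp_generic[of "norm x"] by (simp add: norm_power)
  then have "((\<lambda>n. norm (x^n /\<^sub>R fact n)) has_sum (\<Sum>n. norm (x^n /\<^sub>R fact n))) UNIV"
    by (intro sums_nonneg_imp_has_sum) (auto intro: summable_sums)
  then show ?thesis by (auto simp: summable_on_def)
qed

lemma has_sum_prod2:
  fixes u v :: "nat \<Rightarrow> complex"
  assumes hu: "(u has_sum U) UNIV" and hv: "(v has_sum V) UNIV"
    and au: "(\<lambda>a. norm (u a)) summable_on UNIV" and av: "(\<lambda>a. norm (v a)) summable_on UNIV"
  shows "((\<lambda>(a,b). u a * v b) has_sum (U * V)) UNIV"
    and "(\<lambda>x. norm ((\<lambda>(a,b). u a * v b) x)) summable_on UNIV"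
proof -
  define NU where "NU = infsum (\<lambda>a. norm (u a)) UNIV"
  define NV where "NV = infsum (\<lambda>a. norm (v a)) UNIV"
  have bd: "(\<Sum>x\<in>F. norm ((\<lambda>(a,b). u a * v b) x)) \<le> NU * NV" if F: "finite F" for F
  proof -
    have "(\<Sum>x\<in>F. norm ((\<lambda>(a,b). u a * v b) x)) \<le> (\<Sum>x\<in>fst ` F \<times> snd ` F. norm ((\<lambda>(a,b). u a * v b) x))"
      using F by (intro sum_mono2) (auto simp: image_iff, force+)
    also have "\<dots> = (\<Sum>a\<in>fst ` F. norm (u a)) * (\<Sum>b\<in>snd ` F. norm (v b))"
      by (simp add: sum_product sum.cartesian_product norm_mult case_prod_unfold)
    also have "\<dots> \<le> NU * NV"
      unfolding NU_def NV_def
      by (intro mult_mono finite_sum_le_infsum au av sum_nonneg infsum_nonneg) (use F in auto)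
    finally show ?thesis .
  qed
  show as: "(\<lambda>x. norm ((\<lambda>(a,b). u a * v b) x)) summable_on UNIV"
    by (rule nonneg_bdd_above_summable_on) (auto intro!: bdd_aboveI2 bd)
  have sm: "(\<lambda>(a,b). u a * v b) summable_on (Sigma UNIV (\<lambda>_. UNIV))"
    using abs_summable_summable[OF as] by simp
  have "((\<lambda>(a,b). u a * v b) has_sum (U * V)) (Sigma UNIV (\<lambda>_. UNIV))"
  proof (rule has_sum_SigmaI[OF _ _ sm])
    show "((\<lambda>b. (\<lambda>(a,b). u a * v b) (a, b)) has_sum u a * V) UNIV" for a
      using has_sum_cmult_right[OF hv, of "u a"] by simp
    show "((\<lambda>a. u a * V) has_sum U * V) UNIV"
      using has_sum_cmult_left[OF hu] by simp
  qed
  then show "((\<lambda>(a,b). u a * v b) has_sum (U * V)) UNIV" by simp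
qed
lemma ja_term:
  fixes z :: real and w :: complex
  assumes w: "w \<noteq> 0"
  shows "((complex_of_real (z/2) * w)^(b+m) /\<^sub>R fact (b+m)) * ((- complex_of_real (z/2) * inverse w)^b /\<^sub>R fact b)
       = complex_of_real ((-1)^b / (fact b * fact (b + m)) * (z / 2) ^ (2 * b + m)) * w^m"
proof -
  define c where "c = complex_of_real (z/2)"
  have 1: "(c*w)^(b+m) = c^(b+m) * (w^b * w^m)" by (simp only: power_mult_distrib power_add[of w])
  have 2: "(-c * inverse w)^b = (-1)^b * c^b * inverse (w^b)"
  proof -
    have "(-c * inverse w) = (-1) * c * inverse w" by simp
    then show ?thesis by (simp only: power_mult_distrib power_inverse)
  qed
  have e: "2*b+m = b+(b+m)" by simp
  have 4: "complex_of_real ((-1)^b / (fact b * fact (b + m)) * (z / 2) ^ (2 * b + m))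
         = (-1)^b * (c^b * c^(b+m)) / (fact b * fact (b+m))"
    unfolding c_def e power_add by simp
  have gen: "\<And>A B V W F1 F2 s. V \<noteq> (0::complex) \<Longrightarrow>
     (B * (V * W)) * inverse F2 * (s * A * inverse V) * inverse F1 = (s * (A * B) / (F1 * F2)) * W"
    by (simp add: field_simps)
  have "((c * w)^(b+m) /\<^sub>R fact (b+m)) * ((- c * inverse w)^b /\<^sub>R fact b)
      = (c^(b+m) * (w^b * w^m)) * inverse (fact (b+m)) * ((-1)^b * c^b * inverse (w^b)) * inverse (fact b)"
    unfolding 1 2 by (simp add: scaleR_conv_of_real of_real_inverse mult.assoc)
  also have "\<dots> = ((-1)^b * (c^b * c^(b+m)) / (fact b * fact (b+m))) * w^m"
    by (rule gen) (use w in simp)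
  finally show ?thesis unfolding c_def[symmetric] 4 .
qed
lemma ja_fiber_pos:
  fixes z :: real and w :: complex
  assumes w: "w \<noteq> 0"
  shows "((\<lambda>b. ((complex_of_real (z/2) * w)^(b+m) /\<^sub>R fact (b+m)) * ((- complex_of_real (z/2) * inverse w)^b /\<^sub>R fact b))
          has_sum (complex_of_real (besselJ_nat m z) * w^m)) UNIV"
proof -
  define T where "T b = (-1)^b / (fact b * fact (b + m)) * (z / 2) ^ (2 * b + m)" for b
  have "((\<lambda>b. complex_of_real (T b) * w^m) has_sum (complex_of_real (besselJ_nat m z) * w^m)) UNIV"
  proof (rule norm_summable_imp_has_sum)
    show "summable (\<lambda>b. norm (complex_of_real (T b) * w ^ m))"
      unfolding norm_mult norm_of_real T_def
      by (rule summable_mult2) (use bessel_term_norm_summable[of m z] in simp)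
    show "(\<lambda>b. complex_of_real (T b) * w ^ m) sums (complex_of_real (besselJ_nat m z) * w ^ m)"
      unfolding T_def by (intro sums_mult2 sums_of_real_iff[THEN iffD2] bessel_sums)
  qed
  then show ?thesis unfolding T_def ja_term[OF w] .
qed

lemma bessel_neg_arg: "besselJ_nat m (-z) = (-1)^m * besselJ_nat m z"
proof -
  have eq: "(-1)^k / (fact k * fact (k + m)) * (-z / 2) ^ (2 * k + m)
      = (-1)^m * ((-1)^k / (fact k * fact (k + m)) * (z / 2) ^ (2 * k + m))" for k
  proof -
    have "(-z/2) ^ (2 * k + m) = (-1)^(2*k+m) * (z/2)^(2*k+m)"
      using power_minus[of "z/2" "2*k+m"] by simp
    also have "(-1::real)^(2*k+m) = (-1)^m" by (simp add: power_add power_mult)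
    finally show ?thesis by simp
  qed
  have "(\<lambda>k. (-1)^k / (fact k * fact (k + m)) * (-z / 2) ^ (2 * k + m)) sums besselJ_nat m (-z)"
    using bessel_sums[of m "-z"] by simp
  moreover have "(\<lambda>k. (-1)^k / (fact k * fact (k + m)) * (-z / 2) ^ (2 * k + m)) sums ((-1)^m * besselJ_nat m z)"
    unfolding eq by (intro sums_mult bessel_sums)
  ultimately show ?thesis by (rule sums_unique2)
qed
lemma jacobi_anger:
  fixes z :: real and w :: complex
  assumes w: "w \<noteq> 0"
  shows "((\<lambda>n::int. complex_of_real (besselJ n z) * w powi n)
          has_sum exp (complex_of_real (z/2) * (w - inverse w))) UNIV"
proof -
  define c where "c = complex_of_real (z/2)"
  define u where "u i = (c * w)^i /\<^sub>R fact i" for i :: nat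
  define v where "v j = (- c * inverse w)^j /\<^sub>R fact j" for j :: nat
  define g where "g = (\<lambda>(a,b). u a * v b)"
  have H2: "(g has_sum (exp (c*w) * exp (- c * inverse w))) UNIV"
    unfolding g_def u_def v_def by (rule has_sum_prod2(1)[OF exp_has_sum exp_has_sum exp_abs_summable exp_abs_summable])
  define Fib where "Fib n = {ab::nat\<times>nat. int (fst ab) - int (snd ab) = n}" for n :: int
  define h where "h ab = (int (fst ab) - int (snd ab), ab)" for ab :: "nat \<times> nat"
  have bij: "bij_betw h UNIV (Sigma UNIV Fib)"
    unfolding bij_betw_def inj_on_def h_def Fib_def by (auto simp: image_iff)
  have H3: "((\<lambda>x. g (snd x)) has_sum (exp (c*w) * exp (- c * inverse w))) (Sigma UNIV Fib)"
    using H2 has_sum_reindex_bij_betw[OF bij, of "\<lambda>x. g (snd x)"] by (simp add: h_def)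
  have fib: "((\<lambda>ab. g (snd (n, ab))) has_sum (complex_of_real (besselJ n z) * w powi n)) (Fib n)" for n
  proof (cases "n \<ge> 0")
    case True
    define m where "m = nat n"
    have nm: "n = int m" using True m_def by simp
    have bj: "bij_betw (\<lambda>b. (b + m, b)) UNIV (Fib n)"
      unfolding bij_betw_def inj_on_def Fib_def nm by (auto simp: image_iff)
    have "((\<lambda>b. g (b + m, b)) has_sum (complex_of_real (besselJ_nat m z) * w^m)) UNIV"
      unfolding g_def u_def v_def c_def using ja_fiber_pos[OF w, where z=z and m=m] by simp
    then have "(g has_sum (complex_of_real (besselJ_nat m z) * w^m)) (Fib n)"
      using has_sum_reindex_bij_betw[OF bj, of g] by simp
    then show ?thesis using True by (simp add: nm besselJ_def)
  next
    case False
    define m where "m = nat (-n)"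
    have nm: "n = - int m" using False m_def by simp
    have bj: "bij_betw (\<lambda>a. (a, a + m)) UNIV (Fib n)"
      unfolding bij_betw_def inj_on_def Fib_def nm by (auto simp: image_iff)
    have w': "inverse w \<noteq> 0" using w by simp
    have "((\<lambda>a. g (a, a + m)) has_sum (complex_of_real (besselJ_nat m (-z)) * (inverse w)^m)) UNIV"
      unfolding g_def u_def v_def c_def using ja_fiber_pos[OF w', where z="-z" and m=m] by (simp add: mult.commute)
    then have "(g has_sum (complex_of_real (besselJ_nat m (-z)) * (inverse w)^m)) (Fib n)"
      using has_sum_reindex_bij_betw[OF bj, of g] by simp
    then show ?thesis using False
      by (simp add: nm besselJ_def bessel_neg_arg power_int_minus power_inverse)
  qed
  have "((\<lambda>n. complex_of_real (besselJ n z) * w powi n) has_sum (exp (c*w) * exp (- c * inverse w))) UNIV"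
    by (rule has_sum_Sigma'[OF H3 fib])
  moreover have "exp (c*w) * exp (- c * inverse w) = exp (complex_of_real (z/2) * (w - inverse w))"
    by (simp add: exp_add[symmetric] c_def algebra_simps diff_divide_distrib)
  ultimately show ?thesis by simp
qed
lemma integral_exp_int:
  fixes k :: int
  shows "((\<lambda>t. exp (t *\<^sub>R (\<i> * of_int k))) has_integral (if k = 0 then 2 * complex_of_real pi else 0)) {0..2*pi}"
proof (cases "k = 0")
  case True
  then show ?thesis using has_integral_const_real[of "1::complex" 0 "2*pi"] by (simp add: scaleR_conv_of_real)
next
  case False
  define A where "A = \<i> * complex_of_int k"
  have A0: "A \<noteq> 0" using False by (simp add: A_def)
  have "((\<lambda>t. exp (t *\<^sub>R A) * A) has_integral (exp ((2*pi) *\<^sub>R A) - exp (0 *\<^sub>R A))) {0..2*pi}"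
    by (rule fundamental_theorem_of_calculus) (auto intro: exp_scaleR_has_vector_derivative_right)
  moreover have "exp ((2*pi) *\<^sub>R A) = 1"
  proof -
    have "(2*pi) *\<^sub>R A = complex_of_real (2 * real_of_int k * pi) * \<i>"
      by (simp add: A_def scaleR_conv_of_real mult_ac)
    then show ?thesis using exp_integer_2pi[of "real_of_int k"] by simp
  qed
  ultimately have "((\<lambda>t. exp (t *\<^sub>R A) * A) has_integral 0) {0..2*pi}" by simp
  then have "((\<lambda>t. exp (t *\<^sub>R A) * A * inverse A) has_integral 0 * inverse A) {0..2*pi}"
    by (rule has_integral_mult_left)
  moreover have "\<And>t. exp (t *\<^sub>R A) * A * inverse A = exp (t *\<^sub>R A)" using A0 by simp
  ultimately have "((\<lambda>t. exp (t *\<^sub>R A)) has_integral 0) {0..2*pi}" by simp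
  then show ?thesis using False by (simp add: A_def)
qed

lemma exp_i_cos:
  fixes t :: real
  shows "\<i> * exp (\<i> * of_real t) - inverse (\<i> * exp (\<i> * of_real t)) = 2 * \<i> * of_real (cos t)"
proof -
  have "inverse (\<i> * exp (\<i> * of_real t)) = - \<i> * exp (- (\<i> * of_real t))"
    by (simp add: exp_minus field_simps)
  moreover have "2 * complex_of_real (cos t) = exp (\<i> * of_real t) + exp (- (\<i> * of_real t))"
    unfolding cos_of_real[symmetric] cos_exp_eq[of "complex_of_real t"] by simp
  ultimately show ?thesis by (simp add: algebra_simps)
qed

lemma besselJ_abs_summable: "(\<lambda>n. \<bar>besselJ n c\<bar>) summable_on UNIV"
proof -
  have "((\<lambda>n::int. complex_of_real (besselJ n c) * 1 powi n) has_sum exp (complex_of_real (c/2) * (1 - inverse 1))) UNIV"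
    by (rule jacobi_anger) simp
  then have "(\<lambda>n::int. complex_of_real (besselJ n c)) summable_on UNIV"
    by (auto simp: summable_on_def)
  then have "(\<lambda>n::int. norm (complex_of_real (besselJ n c))) summable_on UNIV"
    using summable_on_iff_abs_summable_on_complex[THEN iffD1] by blast
  then show ?thesis by simp
qed


lemma b1_aux: "m \<noteq> 0 \<Longrightarrow> besselJ (- int m) c = (-1)^m * besselJ_nat m c"
  by (simp add: besselJ_def)
lemma b2_aux: "besselJ (int m) c = besselJ_nat m c" by (simp add: besselJ_def)
lemma negcase: "\<not> (p::int) \<ge> 0 \<Longrightarrow> \<exists>m. p = - int m"
  by (rule exI[of _ "nat (-p)"]) simp

lemma pw_aux: "\<i> powi (- int m) = (-\<i>)^m"
proof -
  have "\<i> powi (- int m) = inverse (\<i> powi (int m))" by (rule power_int_minus)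
  also have "\<dots> = inverse (\<i> ^ m)" by (simp only: power_int_of_nat)
  also have "\<dots> = (inverse \<i>)^m" by (simp only: power_inverse)
  also have "inverse \<i> = -\<i>" by simp
  finally show ?thesis .
qed

lemma f2_aux: "(-1)^m * (-\<i>)^m = \<i>^m"
proof -
  have "(-1)^m * (-\<i>)^m = ((-1) * (-\<i>))^m" by (simp only: power_mult_distrib)
  also have "(-1) * (-\<i>) = \<i>" by simp
  finally show ?thesis .
qed

lemma besselJ_neg_int:
  "complex_of_real (besselJ (-p) c) * \<i> powi (-p) = complex_of_real (besselJ p c) * \<i> powi p"
proof -
  have key: "complex_of_real (besselJ (- int m) c) * \<i> powi (- int m) = complex_of_real (besselJ (int m) c) * \<i> powi (int m)" for m :: nat
  proof (cases "m = 0")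
    case True then show ?thesis by (simp only: minus_zero of_nat_0)
  next
    case False
    have b1: "besselJ (- int m) c = (-1)^m * besselJ_nat m c" using False by (rule b1_aux)
    have b2: "besselJ (int m) c = besselJ_nat m c" by (rule b2_aux)
    have "complex_of_real (besselJ (- int m) c) * \<i> powi (- int m)
        = ((-1)^m * (-\<i>)^m) * complex_of_real (besselJ_nat m c)"
      unfolding b1 pw_aux by (simp only: of_real_mult of_real_power of_real_minus of_real_1 mult.assoc mult.commute mult.left_commute)
    also have "\<dots> = complex_of_real (besselJ (int m) c) * \<i> powi (int m)"
      unfolding f2_aux b2 power_int_of_nat by (rule mult.commute)
    finally show ?thesis .
  qed
  show ?thesis
  proof (cases "p \<ge> 0")
    case True
    then obtain m where pm: "p = int m" using nonneg_int_cases by blast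
    show ?thesis unfolding pm by (rule key)
  next
    case False
    then obtain m where pm: "p = - int m" using negcase by blast
    show ?thesis unfolding pm minus_minus by (rule key[symmetric])
  qed
qed

lemma bessel_integral:
  fixes c :: real and p :: int
  shows "integral {0..2*pi} (\<lambda>t. exp (t *\<^sub>R (\<i> * of_int p)) * exp (\<i> * of_real (c * cos t)))
       = 2 * complex_of_real pi * \<i> powi p * complex_of_real (besselJ p c)"
proof -
  define f where "f n t = complex_of_real (besselJ n c) * \<i> powi n * exp (t *\<^sub>R (\<i> * of_int (n + p)))" for n :: int and t :: real
  define g where "g t = exp (t *\<^sub>R (\<i> * of_int p)) * exp (\<i> * of_real (c * cos t))" for t :: real
  have hs: "((\<lambda>n. f n t) has_sum g t) UNIV" for t
  proof -
    define w where "w = \<i> * exp (\<i> * of_real t)"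
    have w: "w \<noteq> 0" by (simp add: w_def)
    have ja: "((\<lambda>n::int. complex_of_real (besselJ n c) * w powi n) has_sum exp (\<i> * of_real (c * cos t))) UNIV"
      using jacobi_anger[OF w, of c] unfolding w_def exp_i_cos by (simp add: mult_ac)
    have eq: "exp (t *\<^sub>R (\<i> * of_int p)) * (complex_of_real (besselJ n c) * w powi n) = f n t" for n
    proof -
      have "w powi n = \<i> powi n * exp (of_int n * (\<i> * of_real t))"
        by (simp add: w_def power_int_mult_distrib exp_power_int)
      moreover have "exp (t *\<^sub>R (\<i> * of_int (n + p))) = exp (of_int n * (\<i> * of_real t)) * exp (t *\<^sub>R (\<i> * of_int p))"
        by (simp add: exp_add[symmetric] scaleR_conv_of_real algebra_simps)
      ultimately show ?thesis by (simp add: f_def mult_ac)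
    qed
    show ?thesis using has_sum_cmult_right[OF ja, of "exp (t *\<^sub>R (\<i> * of_int p))"]
      unfolding eq g_def by simp
  qed
  define hf where "hf n = (if n = -p then 2 * complex_of_real pi * (complex_of_real (besselJ n c) * \<i> powi n) else 0)" for n
  have A0: "((\<lambda>n. integral (cbox 0 (2*pi)) (f n)) has_sum integral (cbox 0 (2*pi)) g) UNIV"
  proof (rule has_sum_integral_cbox[OF besselJ_abs_summable[of c]])
    show "norm (f n t) \<le> \<bar>besselJ n c\<bar>" for n t
      by (simp add: f_def norm_mult norm_power_int scaleR_conv_of_real)
    show "continuous_on (cbox 0 (2*pi)) (f n)" for n
      unfolding f_def by (intro continuous_intros)
    show "((\<lambda>n. f n t) has_sum g t) UNIV" for t by (rule hs)
  qed
  have Bq: "integral {0..2*pi} (f n) = hf n" for n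
  proof -
    have "((\<lambda>t. complex_of_real (besselJ n c) * \<i> powi n * exp (t *\<^sub>R (\<i> * of_int (n + p)))) has_integral
          (complex_of_real (besselJ n c) * \<i> powi n * (if n + p = 0 then 2 * complex_of_real pi else 0))) {0..2*pi}"
      by (rule has_integral_mult_right[OF integral_exp_int])
    then have I: "integral {0..2*pi} (f n) = complex_of_real (besselJ n c) * \<i> powi n * (if n + p = 0 then 2 * complex_of_real pi else 0)"
      unfolding f_def by (rule integral_unique)
    show ?thesis
    proof (cases "n = -p")
      case True
      then show ?thesis using I by (simp add: hf_def mult_ac)
    next
      case False
      then have "n + p \<noteq> 0" by simp
      then show ?thesis using I False by (simp add: hf_def)
    qed
  qed
  have A: "((\<lambda>n. integral {0..2*pi} (f n)) has_sum integral {0..2*pi} g) UNIV"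
    using A0 by (simp only: cbox_interval)
  have h1: "(hf has_sum integral {0..2*pi} g) UNIV"
    using A by (simp only: Bq)
  have "(hf has_sum sum hf {-p}) {-p}" by (rule has_sum_finite) simp
  then have "(hf has_sum hf (-p)) {-p}" by simp
  moreover have "(hf has_sum hf (-p)) {-p} \<longleftrightarrow> (hf has_sum hf (-p)) UNIV"
    by (rule has_sum_cong_neutral) (auto simp: hf_def)
  ultimately have "(hf has_sum hf (-p)) UNIV" by blast
  moreover have "hf (-p) = 2 * complex_of_real pi * (complex_of_real (besselJ (-p) c) * \<i> powi (-p))"
    by (simp add: hf_def)
  ultimately have h2: "(hf has_sum (2 * complex_of_real pi * (complex_of_real (besselJ (-p) c) * \<i> powi (-p)))) UNIV"
    by simp
  have "integral {0..2*pi} g = 2 * complex_of_real pi * (complex_of_real (besselJ (-p) c) * \<i> powi (-p))"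
    using has_sum_unique[OF h1 h2] .
  then show ?thesis unfolding g_def besselJ_neg_int by (simp add: mult_ac)
qed

lemma ja_cos:
  fixes c s :: real
  shows "((\<lambda>n::int. complex_of_real (besselJ n c) * \<i> powi n * exp (\<i> * of_int n * of_real s))
          has_sum exp (\<i> * of_real (c * cos s))) UNIV"
proof -
  define w where "w = \<i> * exp (\<i> * of_real s)"
  have w: "w \<noteq> 0" by (simp add: w_def)
  have ja: "((\<lambda>n::int. complex_of_real (besselJ n c) * w powi n) has_sum exp (\<i> * of_real (c * cos s))) UNIV"
    using jacobi_anger[OF w, of c] unfolding w_def exp_i_cos by (simp add: mult_ac)
  have "w powi n = \<i> powi n * exp (\<i> * of_int n * of_real s)" for n
    by (simp add: w_def power_int_mult_distrib exp_power_int mult_ac)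
  then show ?thesis using ja by (simp add: mult_ac)
qed

lemma besselJ_le1: "\<bar>besselJ p c\<bar> \<le> 1"
proof -
  define g where "g t = exp (t *\<^sub>R (\<i> * of_int p)) * exp (\<i> * of_real (c * cos t))" for t :: real
  have "continuous_on {0..2*pi} g" unfolding g_def by (intro continuous_intros)
  then have "g integrable_on {0..2*pi}" by (rule integrable_continuous_real)
  then have "(g has_integral integral {0..2*pi} g) (cbox 0 (2*pi))"
    unfolding cbox_interval by (rule integrable_integral)
  moreover have "norm (g t) \<le> 1" for t
    by (simp add: g_def norm_mult scaleR_conv_of_real)
  ultimately have "norm (integral {0..2*pi} g) \<le> 1 * measure lborel (cbox 0 (2*pi::real))"
    by (intro has_integral_bound) auto
  also have "\<dots> = 2 * pi" by simp
  finally have "norm (2 * complex_of_real pi * \<i> powi p * complex_of_real (besselJ p c)) \<le> 2 * pi"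
    using bessel_integral[of p c] unfolding g_def by simp
  then have "2 * pi * \<bar>besselJ p c\<bar> \<le> 2 * pi * 1"
    by (simp add: norm_mult norm_power_int)
  then show ?thesis by (simp add: mult_le_cancel_left)
qed

lemma norm_jfun0_le: "norm (jfun0 m r) \<le> 2 * pi"
proof -
  have "norm (jfun0 m r) = 2 * pi * \<bar>besselJ m (4 * pi * r)\<bar>"
    by (simp add: jfun0_def norm_mult norm_power_int)
  also have "\<dots> \<le> 2 * pi * 1" using besselJ_le1 by (intro mult_left_mono) auto
  finally show ?thesis by simp
qed

theorem lemma6p13:
  fixes k :: "'n::finite \<Rightarrow> int" and y :: "'n \<Rightarrow> real" and x \<phi> :: real
  assumes "x > 0" and "\<And>l. y l > 0"
  shows "(\<lambda>m::int. norm (exp (\<i> * of_int m * complex_of_real \<phi>) * jfun0 m (x * (\<Prod>l\<in>UNIV. y l))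
            * (\<Prod>l\<in>UNIV. jfun0 (k l + m) (x / y l)))) summable_on UNIV
       \<and> ((\<lambda>m::int. exp (\<i> * of_int m * complex_of_real \<phi>) * jfun0 m (x * (\<Prod>l\<in>UNIV. y l))
            * (\<Prod>l\<in>UNIV. jfun0 (k l + m) (x / y l)))
          has_sum (2 * complex_of_real pi * Jk k y (2 * pi * x) \<phi>)) UNIV"
proof -
  define P where "P = (\<Prod>l\<in>UNIV. y l)"
  define c0 where "c0 = 4 * pi * (x * P)"
  define cl where "cl l = 4 * pi * (x / y l)" for l
  define T where "T m = exp (\<i> * of_int m * complex_of_real \<phi>) * jfun0 m (x * P)
            * (\<Prod>l\<in>UNIV. jfun0 (k l + m) (x / y l))" for m :: int
  define G where "G m l t = exp (t *\<^sub>R (\<i> * of_int (k l + m))) * exp (\<i> * of_real (cl l * cos t))"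
    for m :: int and l :: 'n and t :: real
  define a where "a m = complex_of_real (besselJ m c0) * \<i> powi m * exp (\<i> * of_int m * complex_of_real \<phi>)" for m :: int
  define f where "f m \<theta> = a m * (\<Prod>l\<in>UNIV. G m l (\<theta>$l))" for m :: int and \<theta> :: "real^'n"
  define g where "g \<theta> = exp (\<i> * complex_of_real (Theta k \<theta> y (2 * pi * x) \<phi>))" for \<theta> :: "real^'n"
  define box where "box = cbox (0::real^'n) (\<chi> l. 2 * pi)"
  have hs: "((\<lambda>m. f m \<theta>) has_sum g \<theta>) UNIV" for \<theta>
  proof -
    define s where "s = (\<Sum>l\<in>UNIV. \<theta> $ l) + \<phi>"
    define E where "E = (\<Prod>l\<in>UNIV. exp (\<i> * of_real (of_int (k l) * \<theta> $ l + cl l * cos (\<theta> $ l))))"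
    have g_eq: "g \<theta> = exp (\<i> * of_real (c0 * cos s)) * E"
    proof -
      have "Theta k \<theta> y (2 * pi * x) \<phi> = c0 * cos s + (\<Sum>l\<in>UNIV. of_int (k l) * \<theta> $ l + cl l * cos (\<theta> $ l))"
        unfolding Theta_def c0_def cl_def s_def P_def by (simp add: mult_ac)
      then show ?thesis
        unfolding g_def E_def
        by (simp add: distrib_left exp_add exp_sum sum_distrib_left)
    qed
    have ja: "((\<lambda>n. (complex_of_real (besselJ n c0) * \<i> powi n * exp (\<i> * of_int n * of_real s)) * E)
        has_sum exp (\<i> * of_real (c0 * cos s)) * E) UNIV"
      by (rule has_sum_cmult_left[OF ja_cos])
    have eq: "(complex_of_real (besselJ n c0) * \<i> powi n * exp (\<i> * of_int n * of_real s)) * E = f n \<theta>" for n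
    proof -
      have e1: "exp (\<i> * of_int n * of_real s) = exp (\<i> * of_int n * complex_of_real \<phi>) * (\<Prod>l\<in>UNIV. exp (\<i> * of_int n * of_real (\<theta> $ l)))"
        unfolding s_def by (simp add: distrib_left exp_add exp_sum sum_distrib_left)
      have e2: "(\<Prod>l\<in>UNIV. exp (\<i> * of_int n * of_real (\<theta> $ l))) * E = (\<Prod>l\<in>UNIV. G n l (\<theta>$l))"
        unfolding E_def G_def prod.distrib[symmetric]
        by (intro prod.cong refl) (simp add: exp_add[symmetric] scaleR_conv_of_real algebra_simps)
      show ?thesis unfolding f_def a_def e1 e2[symmetric] by (simp add: mult_ac)
    qed
    show ?thesis using ja unfolding eq g_eq .
  qed
  have Gcont: "continuous_on {0..2*pi} (G m l)" for m l
    unfolding G_def by (intro continuous_intros)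
  have Gint: "integral {0..2*pi} (G m l) = jfun0 (k l + m) (x / y l)" for m l
    unfolding G_def jfun0_def cl_def by (subst bessel_integral) simp
  have fint: "integral box (f m) = a m * (\<Prod>l\<in>UNIV. jfun0 (k l + m) (x / y l))" for m
  proof -
    have "integral box (f m) = a m * integral box (\<lambda>\<theta>. \<Prod>l\<in>UNIV. G m l (\<theta>$l))"
      unfolding f_def by (rule integral_mult_right)
    also have "integral box (\<lambda>\<theta>. \<Prod>l\<in>UNIV. G m l (\<theta>$l)) = (\<Prod>l\<in>UNIV. integral {0..2*pi} (G m l))"
      unfolding box_def by (rule integral_cbox_prod_cart) (auto intro: Gcont)
    finally show ?thesis by (simp add: Gint)
  qed
  have Tm: "T m = 2 * complex_of_real pi * integral box (f m)" for m
    unfolding T_def fint a_def jfun0_def c0_def by (simp add: mult_ac)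
  have main: "((\<lambda>m. integral box (f m)) has_sum integral box g) UNIV"
    unfolding box_def
  proof (rule has_sum_integral_cbox[OF besselJ_abs_summable[of c0]])
    show "norm (f n \<theta>) \<le> \<bar>besselJ n c0\<bar>" for n \<theta>
    proof -
      have "norm (G n l t) = 1" for l t by (simp add: G_def norm_mult scaleR_conv_of_real)
      then have "norm (\<Prod>l\<in>UNIV. G n l (\<theta>$l)) = 1" by (simp add: prod_norm[symmetric])
      then show ?thesis by (simp add: f_def a_def norm_mult norm_power_int)
    qed
    show "continuous_on (cbox 0 (\<chi> l. 2 * pi)) (f n)" for n
      unfolding f_def G_def by (intro continuous_intros)
    show "((\<lambda>n. f n \<theta>) has_sum g \<theta>) UNIV" for \<theta> by (rule hs)
  qed
  have Jk_eq: "Jk k y (2 * pi * x) \<phi> = integral box g"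
    unfolding Jk_def box_def g_def ..
  have S: "(T has_sum (2 * complex_of_real pi * Jk k y (2 * pi * x) \<phi>)) UNIV"
    unfolding Tm Jk_eq by (rule has_sum_cmult_right[OF main])
  have NS: "(\<lambda>m. norm (T m)) summable_on UNIV"
  proof (rule summable_on_comparison_test)
    show "(\<lambda>m. (2 * pi) * (2 * pi) ^ CARD('n) * \<bar>besselJ m c0\<bar>) summable_on UNIV"
      by (rule summable_on_cmult_right[OF besselJ_abs_summable])
    show "norm (T m) \<le> (2 * pi) * (2 * pi) ^ CARD('n) * \<bar>besselJ m c0\<bar>" for m
    proof -
      have "norm (\<Prod>l\<in>UNIV. jfun0 (k l + m) (x / y l)) = (\<Prod>l\<in>UNIV. norm (jfun0 (k l + m) (x / y l)))"
        by (simp add: prod_norm)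
      also have "\<dots> \<le> (\<Prod>l\<in>(UNIV::'n set). 2 * pi)"
        by (intro prod_mono) (auto intro: norm_jfun0_le)
      finally have p: "norm (\<Prod>l\<in>UNIV. jfun0 (k l + m) (x / y l)) \<le> (2 * pi) ^ CARD('n)" by simp
      have j: "norm (jfun0 m (x * P)) = 2 * pi * \<bar>besselJ m c0\<bar>"
        by (simp add: jfun0_def c0_def norm_mult norm_power_int)
      have "norm (T m) = 2 * pi * \<bar>besselJ m c0\<bar> * norm (\<Prod>l\<in>UNIV. jfun0 (k l + m) (x / y l))"
        unfolding T_def by (simp add: norm_mult j)
      also have "\<dots> \<le> 2 * pi * \<bar>besselJ m c0\<bar> * (2 * pi) ^ CARD('n)"
        by (intro mult_left_mono p) auto
      finally show ?thesis by (simp add: mult_ac)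
    qed
    show "0 \<le> norm (T m)" for m by simp
  qed
  show ?thesis using NS S unfolding T_def P_def by simp
qed

end
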